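(* Let $G$ be a free group on $k\ge 2$ generators and let $\Phi$ be a uniformly continuous action of $G$ on a non-discrete metric space $\Omega$. (1) If for some $g\in G$ the homeomorphism $f_g$ is expansive (on $\Omega$), then $\Phi$ does not have the shadowing property. (2) If for some $g\in G$ with $g\neq e$ the homeomorphism $f_g$ does not have the shadowing property, then $\Phi$ does not have the shadowing property.
   Context: An action of a group $G$ on a metric space $(\Omega,\mathrm{dist})$ is a map $\Phi:G\times\Omega\to\Omega$ such that each $f_g=\Phi(g,\cdot)$ is a homeomorphism, $\Phi(e,x)=x$, and $\Phi(g_1g_2,x)=\Phi(g_1,\Phi(g_2,x))$. For a finitely generated $G$, the action is uniformly continuous if for some finite symmetric generating set $S$ (symmetric: $s\in S\Rightarrow s^{-1}\in S$) all maps $f_s$, $s\in S$, are uniformly continuous. Fix a finite symmetric generating set $S$ of $G$. For $d>0$, a family $\{y_g\}_{g\in G}\subset\Omega$ is a $d$-pseudotrajectory if $\mathrm{dist}(y_{sg},f_s(y_g))<d$ for all $s\in S$, $g\in G$. The action has the shadowing property if for every $\varepsilon>0$ there is $d>0$ such that for every $d$-pseudotrajectory $\{y_g\}$ there is $x_e\in\Omega$ with $\mathrm{dist}(y_g,f_g(x_e))<\varepsilon$ for all $g\in G$ (this does not depend on the choice of $S$). A homeomorphism $f$ of $\Omega$ has the shadowing property if the $\mathbb Z$-action $(j,x)\mapsto f^j(x)$ with generating set $\{1,-1\}$ has it, i.e. for every $\varepsilon>0$ there is $d>0$ such that every sequence $\{x_j\}_{j\in\mathbb Z}$ with $\mathrm{dist}(x_{j+1},f(x_j))<d$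 (equivalently, also controlling $\mathrm{dist}(x_{j-1},f^{-1}(x_j))$ as required by the symmetric generating set) admits $u$ with $\mathrm{dist}(x_j,f^j(u))<\varepsilon$ for all $j$. The homeomorphism $f$ is expansive on $\Omega$ if there is $\Delta>0$ such that $\mathrm{dist}(f^j(x_1),f^j(x_2))<\Delta$ for all $j\in\mathbb Z$ implies $x_1=x_2$. *)

theory Defs
  imports "HOL-Analysis.Analysis" "HOL-Algebra.Generated_Groups"
begin

text \<open>A letter (i, True) stands for the generator a_i, (i, False) for its inverse.\<close>
type_synonym letter = "nat \<times> bool"
type_synonym word = "letter list"

definition inv_letter :: "letter \<Rightarrow> letter" where
  "inv_letter a = (fst a, \<not> snd a)"

fun reduced :: "word \<Rightarrow> bool" where
  "reduced [] = True"
| "reduced [a] = True"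
| "reduced (a # b # w) = (b \<noteq> inv_letter a \<and> reduced (b # w))"

fun cons_red :: "letter \<Rightarrow> word \<Rightarrow> word" where
  "cons_red a [] = [a]"
| "cons_red a (b # w) = (if b = inv_letter a then w else a # b # w)"

definition word_mult :: "word \<Rightarrow> word \<Rightarrow> word" where
  "word_mult u v = foldr cons_red u v"

definition free_group :: "nat \<Rightarrow> word monoid" where
  "free_group k = \<lparr> carrier = {w. reduced w \<and> (\<forall>a \<in> set w. fst a < k)},
                    mult = word_mult, one = [] \<rparr>"

definition is_action :: "('g, 'm) monoid_scheme \<Rightarrow> ('g \<Rightarrow> 'a::metric_space \<Rightarrow> 'a) \<Rightarrow> bool" where
  "is_action G \<Phi> \<longleftrightarrow>
     (\<forall>g \<in> carrier G. \<exists>h. homeomorphism UNIV UNIV (\<Phi> g) h) \<and>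
     (\<forall>x. \<Phi> \<one>\<^bsub>G\<^esub> x = x) \<and>
     (\<forall>g1 \<in> carrier G. \<forall>g2 \<in> carrier G. \<forall>x. \<Phi> (g1 \<otimes>\<^bsub>G\<^esub> g2) x = \<Phi> g1 (\<Phi> g2 x))"

definition sym_gen_set :: "('g, 'm) monoid_scheme \<Rightarrow> 'g set \<Rightarrow> bool" where
  "sym_gen_set G S \<longleftrightarrow> finite S \<and> S \<subseteq> carrier G \<and>
     (\<forall>s \<in> S. inv\<^bsub>G\<^esub> s \<in> S) \<and> generate G S = carrier G"

definition unif_cont_action :: "('g, 'm) monoid_scheme \<Rightarrow> ('g \<Rightarrow> 'a::metric_space \<Rightarrow> 'a) \<Rightarrow> bool" where
  "unif_cont_action G \<Phi> \<longleftrightarrow>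
     (\<exists>S. sym_gen_set G S \<and> (\<forall>s \<in> S. uniformly_continuous_on UNIV (\<Phi> s)))"

definition pseudotrajectory ::
  "('g, 'm) monoid_scheme \<Rightarrow> 'g set \<Rightarrow> ('g \<Rightarrow> 'a::metric_space \<Rightarrow> 'a) \<Rightarrow> real \<Rightarrow> ('g \<Rightarrow> 'a) \<Rightarrow> bool" where
  "pseudotrajectory G S \<Phi> d y \<longleftrightarrow>
     (\<forall>s \<in> S. \<forall>g \<in> carrier G. dist (y (s \<otimes>\<^bsub>G\<^esub> g)) (\<Phi> s (y g)) < d)"

definition action_shadowing ::
  "('g, 'm) monoid_scheme \<Rightarrow> 'g set \<Rightarrow> ('g \<Rightarrow> 'a::metric_space \<Rightarrow> 'a) \<Rightarrow> bool" where
  "action_shadowing G S \<Phi> \<longleftrightarrow>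
     (\<forall>\<epsilon>>0. \<exists>d>0. \<forall>y. pseudotrajectory G S \<Phi> d y \<longrightarrow>
        (\<exists>x. \<forall>g \<in> carrier G. dist (y g) (\<Phi> g x) < \<epsilon>))"

definition int_iter :: "('a \<Rightarrow> 'a) \<Rightarrow> int \<Rightarrow> 'a \<Rightarrow> 'a" where
  "int_iter f j = (if 0 \<le> j then f ^^ nat j else inv_into UNIV f ^^ nat (- j))"

text \<open>Shadowing of the Z-action generated by f, with generating set {1,-1}.\<close>
definition homeo_shadowing :: "('a::metric_space \<Rightarrow> 'a) \<Rightarrow> bool" where
  "homeo_shadowing f \<longleftrightarrow>
     (\<forall>\<epsilon>>0. \<exists>d>0. \<forall>x :: int \<Rightarrow> 'a.
        (\<forall>j. dist (x (j + 1)) (f (x j)) < d \<and> dist (x (j - 1)) (inv_into UNIV f (x j)) < d) \<longrightarrow>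
        (\<exists>u. \<forall>j. dist (x j) (int_iter f j u) < \<epsilon>))"

definition expansive :: "('a::metric_space \<Rightarrow> 'a) \<Rightarrow> bool" where
  "expansive f \<longleftrightarrow>
     (\<exists>\<Delta>>0. \<forall>x1 x2. (\<forall>j. dist (int_iter f j x1) (int_iter f j x2) < \<Delta>) \<longrightarrow> x1 = x2)"

definition non_discrete :: "'a::metric_space itself \<Rightarrow> bool" where
  "non_discrete _ \<longleftrightarrow> (\<exists>x::'a. x islimpt UNIV)"

end

theory Submission
  imports Defs
begin

lemma inv_inv[simp]: "inv_letter (inv_letter a) = a"
  by (simp add: inv_letter_def)
lemma inv_neq[simp]: "inv_letter a \<noteq> a" "a \<noteq> inv_letter a"
  by (auto simp: inv_letter_def prod_eq_iff)
lemma inv_fst[simp]: "fst (inv_letter a) = fst a"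
  by (simp add: inv_letter_def)
lemma inv_eq_iff: "(b = inv_letter a) = (a = inv_letter b)"
  by auto

lemma reduced_Cons: "reduced (a # w) \<longleftrightarrow> reduced w \<and> (w \<noteq> [] \<longrightarrow> hd w \<noteq> inv_letter a)"
  by (cases w) auto

lemma reduced_append: "reduced (u @ v) \<longleftrightarrow> reduced u \<and> reduced v \<and>
   (u \<noteq> [] \<longrightarrow> v \<noteq> [] \<longrightarrow> hd v \<noteq> inv_letter (last u))"
  by (induction u) (auto simp: reduced_Cons)

lemma reduced_cons_red: "reduced w \<Longrightarrow> reduced (cons_red a w)"
  by (cases w) (auto simp: reduced_Cons)

lemma set_cons_red: "set (cons_red a w) \<subseteq> insert a (set w)"
  by (cases w) auto

lemma reduced_word_mult: "reduced v \<Longrightarrow> reduced (word_mult u v)"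
  unfolding word_mult_def by (induction u) (auto intro: reduced_cons_red)

lemma set_word_mult: "set (word_mult u v) \<subseteq> set u \<union> set v"
  unfolding word_mult_def by (induction u) (use set_cons_red in fastforce)+

lemma word_mult_append: "reduced (u @ v) \<Longrightarrow> word_mult u v = u @ v"
proof (induction u)
  case Nil then show ?case by (simp add: word_mult_def)
next
  case (Cons a u)
  have r: "reduced (u @ v)" using Cons.prems by (simp add: reduced_Cons)
  have "word_mult (a # u) v = cons_red a (u @ v)"
    using Cons.IH[OF r] by (simp add: word_mult_def)
  also have "\<dots> = a # u @ v" using Cons.prems
    by (cases "u @ v") (auto simp: reduced_Cons)
  finally show ?case by simp
qed

definition winv :: "word \<Rightarrow> word" where "winv w = rev (map inv_letter w)"

lemma winv_simps[simp]: "winv [] = []" "winv (a # w) = winv w @ [inv_letter a]"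
  "winv (u @ v) = winv v @ winv u" "winv (winv w) = w" "length (winv w) = length w"
  by (auto simp: winv_def rev_map[symmetric] comp_def)

lemma set_winv: "set (winv w) = inv_letter ` set w"
  by (simp add: winv_def)

lemma reduced_snoc: "reduced (w @ [a]) \<longleftrightarrow> reduced w \<and> (w \<noteq> [] \<longrightarrow> a \<noteq> inv_letter (last w))"
  by (simp add: reduced_append)

lemma reduced_winv: "reduced w \<Longrightarrow> reduced (winv w)"
proof (induction w)
  case Nil then show ?case by simp
next
  case (Cons a w)
  have l: "w \<noteq> [] \<Longrightarrow> last (winv w) = inv_letter (hd w)"
    by (cases w) auto
  have r: "reduced w" "w \<noteq> [] \<Longrightarrow> hd w \<noteq> inv_letter a" using Cons.prems by (auto simp: reduced_Cons)
  show ?case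
  proof (cases "w = []")
    case True then show ?thesis by simp
  next
    case False
    then have "last (winv w) = inv_letter (hd w)" by (rule l)
    have "inv_letter a \<noteq> inv_letter (last (winv w))"
      using \<open>last (winv w) = inv_letter (hd w)\<close> r(2)[OF False] by auto
    moreover have "winv w \<noteq> []" using False by (cases w) auto
    ultimately show ?thesis using Cons.IH[OF r(1)] by (simp add: reduced_snoc)
  qed
qed

lemma last_winv: "w \<noteq> [] \<Longrightarrow> last (winv w) = inv_letter (hd w)"
  by (cases w) auto
lemma hd_winv: "w \<noteq> [] \<Longrightarrow> hd (winv w) = inv_letter (last w)"
  by (simp add: winv_def hd_rev last_map)

lemma word_mult_winv: "reduced (winv w @ v) \<Longrightarrow> word_mult w (winv w @ v) = v"
proof (induction w arbitrary: v)
  case Nil then show ?case by (simp add: word_mult_def)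
next
  case (Cons a w)
  have r: "reduced (winv w @ (inv_letter a # v))" using Cons.prems by simp
  have "word_mult (a # w) (winv (a # w) @ v) = cons_red a (word_mult w (winv w @ (inv_letter a # v)))"
    by (simp add: word_mult_def)
  also have "\<dots> = cons_red a (inv_letter a # v)" using Cons.IH[OF r] by simp
  also have "\<dots> = v" by simp
  finally show ?case .
qed

lemma word_mult_winv0: "reduced w \<Longrightarrow> word_mult w (winv w) = []"
  using word_mult_winv[of w "[]"] reduced_winv by simp

lemma drop_split: "drop n g = take 1 (drop n g) @ drop (Suc n) g"
proof (cases "n < length g")
  case True then show ?thesis by (simp add: Cons_nth_drop_Suc[OF True, symmetric])
next
  case False then show ?thesis by simp
qed

lemma word_mult_drop: "\<exists>p. word_mult s g = p @ drop (length s) g \<and> length p \<le> 2 * length s"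
proof (induction s)
  case Nil then show ?case by (simp add: word_mult_def)
next
  case (Cons a s)
  then obtain p where p: "word_mult s g = p @ drop (length s) g" "length p \<le> 2 * length s" by blast
  have wm: "word_mult (a # s) g = cons_red a (p @ drop (length s) g)"
    using p by (simp add: word_mult_def)
  show ?case
  proof (cases p)
    case Nil
    show ?thesis
    proof (cases "drop (length s) g")
      case Nil2: Nil
      then show ?thesis using wm Nil by (intro exI[of _ "[a]"]) auto
    next
      case (Cons b D)
      have D: "D = drop (Suc (length s)) g" using Cons
        by (metis drop_Suc list.sel(3) tl_drop)
      show ?thesis
      proof (cases "b = inv_letter a")
        case True then show ?thesis using wm Nil Cons D by (intro exI[of _ "[]"]) auto
      next
        case False then show ?thesis using wm Nil Cons D by (intro exI[of _ "[a,b]"]) auto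
      qed
    qed
  next
    case (Cons b p')
    define D where "D = drop (length s) g"
    have split: "D = take 1 D @ drop (Suc (length s)) g"
      unfolding D_def by (rule drop_split)
    show ?thesis
    proof (cases "b = inv_letter a")
      case True
      have e: "p' @ D = p' @ (take 1 D @ drop (Suc (length s)) g)" using split by (rule arg_cong)
      have "word_mult (a # s) g = cons_red a (b # (p' @ D))" using wm Cons D_def by simp
      also have "\<dots> = p' @ D" using True by simp
      finally have "word_mult (a # s) g = (p' @ take 1 D) @ drop (Suc (length s)) g"
        using e by simp
      then show ?thesis using p Cons by (intro exI[of _ "p' @ take 1 D"]) auto
    next
      case False
      have e: "a # b # p' @ D = a # b # p' @ (take 1 D @ drop (Suc (length s)) g)" using split by simp
      have "word_mult (a # s) g = cons_red a (b # (p' @ D))" using wm Cons D_def by simp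
      also have "\<dots> = a # b # p' @ D" using False by simp
      finally have "word_mult (a # s) g = (a # b # p' @ take 1 D) @ drop (Suc (length s)) g"
        using e by simp
      then show ?thesis using p Cons by (intro exI[of _ "a # b # p' @ take 1 D"]) auto
    qed
  qed
qed

lemma length_word_mult: "length (word_mult s g) \<le> 2 * length s + length g"
  using word_mult_drop[of s g] by auto


section \<open>Integer iterates\<close>

lemma int_iter_nonneg: "0 \<le> j \<Longrightarrow> int_iter f j = f ^^ nat j"
  by (simp add: int_iter_def)
lemma int_iter_neg: "j < 0 \<Longrightarrow> int_iter f j = inv_into UNIV f ^^ nat (- j)"
  by (simp add: int_iter_def)
lemma int_iter_0[simp]: "int_iter f 0 = id"
  by (simp add: int_iter_def)

lemma int_iter_succ:
  assumes "bij f" shows "int_iter f (j + 1) = f \<circ> int_iter f j"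
proof (cases "0 \<le> j")
  case True
  then have "nat (j + 1) = Suc (nat j)" by simp
  then show ?thesis using True by (simp add: int_iter_def)
next
  case False
  let ?g = "inv_into UNIV f"
  have fg: "f \<circ> ?g = id" using assms by (simp add: bij_def surj_iff)
  have n: "nat (- j) = Suc (nat (- (j + 1)))" using False by simp
  have "f \<circ> int_iter f j = f \<circ> (?g \<circ> ?g ^^ nat (- (j + 1)))"
    using False n by (simp add: int_iter_def funpow_Suc_right[symmetric] del: funpow.simps)
       (simp add: funpow_Suc_right)
  also have "\<dots> = ?g ^^ nat (- (j + 1))" using fg by (simp add: o_assoc)
  also have "\<dots> = int_iter f (j + 1)"
    using False by (cases "j + 1 = 0") (auto simp: int_iter_def)
  finally show ?thesis by simp
qed

lemma int_iter_pred:
  assumes "bij f" shows "int_iter f (j - 1) = inv_into UNIV f \<circ> int_iter f j"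
proof -
  let ?g = "inv_into UNIV f"
  have gf: "?g \<circ> f = id" using assms by (simp add: bij_def inj_iff)
  have "?g \<circ> int_iter f j = ?g \<circ> int_iter f ((j - 1) + 1)" by simp
  also have "\<dots> = ?g \<circ> (f \<circ> int_iter f (j - 1))" by (simp only: int_iter_succ[OF assms])
  also have "\<dots> = int_iter f (j - 1)" using gf by (simp add: o_assoc)
  finally show ?thesis by simp
qed

lemma int_iter_add:
  assumes "bij f" shows "int_iter f (a + b) = int_iter f a \<circ> int_iter f b"
proof (induction a rule: int_induct[where k = 0])
  case base then show ?case by simp
next
  case (step1 i)
  have "int_iter f (i + 1 + b) = int_iter f ((i + b) + 1)" by (simp add: algebra_simps)
  also have "\<dots> = f \<circ> int_iter f (i + b)" by (rule int_iter_succ[OF assms])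
  also have "\<dots> = int_iter f (i + 1) \<circ> int_iter f b"
    using step1.IH int_iter_succ[OF assms, of i] by (simp add: fun_eq_iff)
  finally show ?case .
next
  case (step2 i)
  have "int_iter f (i - 1 + b) = int_iter f ((i + b) - 1)" by (simp add: algebra_simps)
  also have "\<dots> = inv_into UNIV f \<circ> int_iter f (i + b)" by (rule int_iter_pred[OF assms])
  also have "\<dots> = int_iter f (i - 1) \<circ> int_iter f b"
    using step2.IH int_iter_pred[OF assms, of i] by (simp add: fun_eq_iff)
  finally show ?case .
qed

lemma int_iter_conj:
  assumes "bij f" "bij g" "\<And>x. f (b x) = b (g x)"
  shows "int_iter f j (b x) = b (int_iter g j x)"
proof (induction j arbitrary: x rule: int_induct[where k = 0])
  case base then show ?case by simp
next
  case (step1 i)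
  show ?case using step1.IH assms by (simp add: int_iter_succ[OF assms(1)] int_iter_succ[OF assms(2)])
next
  case (step2 i)
  have c: "inv_into UNIV f (b y) = b (inv_into UNIV g y)" for y
  proof -
    have "f (b (inv_into UNIV g y)) = b (g (inv_into UNIV g y))" using assms(3) by blast
    also have "\<dots> = b y" using assms(2) by (simp add: bij_is_surj f_inv_into_f)
    finally show ?thesis using assms(1) by (metis bij_is_inj inv_f_f)
  qed
  show ?case using step2.IH c by (simp add: int_iter_pred[OF assms(1)] int_iter_pred[OF assms(2)])
qed


lemma carrier_fg: "w \<in> carrier (free_group k) \<longleftrightarrow> reduced w \<and> (\<forall>a\<in>set w. fst a < k)"
  by (simp add: free_group_def)
lemma one_fg[simp]: "\<one>\<^bsub>free_group k\<^esub> = []"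
  by (simp add: free_group_def)
lemma mult_fg[simp]: "x \<otimes>\<^bsub>free_group k\<^esub> y = word_mult x y"
  by (simp add: free_group_def)

lemma carrier_app: "u @ v \<in> carrier (free_group k) \<Longrightarrow> u \<in> carrier (free_group k) \<and> v \<in> carrier (free_group k)"
  by (auto simp: carrier_fg reduced_append)

lemma carrier_winv: "w \<in> carrier (free_group k) \<Longrightarrow> winv w \<in> carrier (free_group k)"
  by (auto simp: carrier_fg reduced_winv set_winv)

lemma carrier_mult: "u \<in> carrier (free_group k) \<Longrightarrow> v \<in> carrier (free_group k) \<Longrightarrow> word_mult u v \<in> carrier (free_group k)"
  using set_word_mult[of u v] by (auto simp: carrier_fg reduced_word_mult)

lemma carrier_take: "w \<in> carrier (free_group k) \<Longrightarrow> take n w \<in> carrier (free_group k)"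
  using carrier_app[of "take n w" "drop n w"] by simp
lemma carrier_drop: "w \<in> carrier (free_group k) \<Longrightarrow> drop n w \<in> carrier (free_group k)"
  using carrier_app[of "take n w" "drop n w"] by simp

section \<open>Powers of a word\<close>

definition cp :: "word \<Rightarrow> nat \<Rightarrow> word" where "cp c n = concat (replicate n c)"

lemma cp_0[simp]: "cp c 0 = []" and cp_Suc: "cp c (Suc n) = c @ cp c n"
  by (simp_all add: cp_def)
lemma cp_add: "cp c (a + b) = cp c a @ cp c b"
  by (simp add: cp_def replicate_add)
lemma cp_Suc': "cp c (Suc n) = cp c n @ c"
  using cp_add[of c n 1] by (simp add: cp_def)
lemma length_cp[simp]: "length (cp c n) = n * length c"
  by (induction n) (simp_all add: cp_Suc)
lemma set_cp: "set (cp c n) \<subseteq> set c"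
  by (auto simp: cp_def)
lemma winv_cp: "winv (cp c n) = cp (winv c) n"
proof (induction n)
  case 0 then show ?case by simp
next
  case (Suc n)
  have "winv (cp c (Suc n)) = winv (c @ cp c n)" by (simp only: cp_Suc)
  also have "\<dots> = cp (winv c) n @ winv c" using Suc by simp
  also have "\<dots> = cp (winv c) (Suc n)" by (simp only: cp_Suc')
  finally show ?case .
qed
lemma hd_cp: "c \<noteq> [] \<Longrightarrow> n > 0 \<Longrightarrow> hd (cp c n) = hd c"
  by (cases n) (simp_all add: cp_Suc)
lemma last_cp: "c \<noteq> [] \<Longrightarrow> n > 0 \<Longrightarrow> last (cp c n) = last c"
  by (cases n) (simp_all add: cp_Suc')
lemma cp_nil_iff: "c \<noteq> [] \<Longrightarrow> cp c n = [] \<longleftrightarrow> n = 0"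
  using length_cp[of c n] by (metis length_0_conv length_greater_0_conv mult_is_0 cp_0)

lemma reduced_cp:
  assumes "reduced (c @ c)" "c \<noteq> []" shows "reduced (cp c n)"
proof (induction n)
  case 0 then show ?case by simp
next
  case (Suc n)
  have hl: "hd c \<noteq> inv_letter (last c)" using assms by (simp add: reduced_append)
  have rc: "reduced c" using assms by (simp add: reduced_append)
  show ?case using Suc hl rc assms(2)
    by (cases n) (auto simp: cp_Suc reduced_append hd_cp cp_nil_iff)
qed

lemma cyc_winv: "reduced (c @ c) \<Longrightarrow> reduced (winv c @ winv c)"
  using reduced_winv[of "c @ c"] by simp

lemma carrier_cp: "c \<in> carrier (free_group k) \<Longrightarrow> reduced (c @ c) \<Longrightarrow> c \<noteq> [] \<Longrightarrow> cp c n \<in> carrier (free_group k)"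
  using set_cp[of c n] reduced_cp[of c n] by (auto simp: carrier_fg)

section \<open>Actions\<close>

locale frees =
  fixes k :: nat and \<Phi> :: "word \<Rightarrow> 'a::metric_space \<Rightarrow> 'a"
  assumes act: "is_action (free_group k) \<Phi>"
begin

abbreviation "C \<equiv> carrier (free_group k)"

lemma Phi_one[simp]: "\<Phi> [] x = x"
  using act by (simp add: is_action_def)

lemma Phi_mult: "u \<in> C \<Longrightarrow> v \<in> C \<Longrightarrow> \<Phi> (word_mult u v) x = \<Phi> u (\<Phi> v x)"
  using act by (simp add: is_action_def)

lemma Phi_app: "u @ v \<in> C \<Longrightarrow> \<Phi> (u @ v) x = \<Phi> u (\<Phi> v x)"
proof -
  assume a: "u @ v \<in> C"
  then have "u \<in> C" "v \<in> C" using carrier_app by blast+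
  moreover have "word_mult u v = u @ v" using a by (intro word_mult_append) (simp add: carrier_fg)
  ultimately show ?thesis using Phi_mult[of u v x] by simp
qed

lemma Phi_winv1: "w \<in> C \<Longrightarrow> \<Phi> w (\<Phi> (winv w) x) = x"
proof -
  assume a: "w \<in> C"
  then have "winv w \<in> C" by (rule carrier_winv)
  moreover have "word_mult w (winv w) = []" using a by (intro word_mult_winv0) (simp add: carrier_fg)
  ultimately show ?thesis using Phi_mult[of w "winv w" x] a by simp
qed

lemma Phi_winv2: "w \<in> C \<Longrightarrow> \<Phi> (winv w) (\<Phi> w x) = x"
  using Phi_winv1[of "winv w" x] carrier_winv[of w] by simp

lemma bij_Phi: "w \<in> C \<Longrightarrow> bij (\<Phi> w)"
proof -
  assume a: "w \<in> C"
  show ?thesis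
  proof (rule bij_betw_byWitness[of _ "\<Phi> (winv w)"])
    show "\<Phi> w ` UNIV \<subseteq> UNIV" by simp
    show "\<Phi> (winv w) ` UNIV \<subseteq> UNIV" by simp
  qed (use a Phi_winv1 Phi_winv2 in auto)
qed

lemma inj_Phi: "w \<in> C \<Longrightarrow> inj (\<Phi> w)"
  using bij_Phi bij_is_inj by blast

lemma inv_Phi: "w \<in> C \<Longrightarrow> inv_into UNIV (\<Phi> w) = \<Phi> (winv w)"
proof
  fix x assume w: "w \<in> C"
  have "inv_into UNIV (\<Phi> w) (\<Phi> w (\<Phi> (winv w) x)) = \<Phi> (winv w) x"
    using inj_Phi[OF w] by (simp add: inv_f_f)
  then show "inv_into UNIV (\<Phi> w) x = \<Phi> (winv w) x" using Phi_winv1[OF w] by simp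
qed

lemma cont_Phi: "w \<in> C \<Longrightarrow> continuous_on UNIV (\<Phi> w)"
  using act unfolding is_action_def homeomorphism_def by blast

lemma Phi_cp: "c \<in> C \<Longrightarrow> reduced (c @ c) \<Longrightarrow> c \<noteq> [] \<Longrightarrow> \<Phi> (cp c n) = \<Phi> c ^^ n"
proof (induction n)
  case 0 then show ?case by (simp add: fun_eq_iff)
next
  case (Suc n)
  have "cp c (Suc n) \<in> C" using carrier_cp Suc.prems by blast
  then show ?case using Suc by (simp add: fun_eq_iff cp_Suc Phi_app)
qed

lemma int_iter_Phi:
  assumes "q \<in> C" "reduced (q @ q)" "q \<noteq> []"
  shows "int_iter (\<Phi> q) j = (if 0 \<le> j then \<Phi> (cp q (nat j)) else \<Phi> (cp (winv q) (nat (- j))))"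
proof -
  have w: "winv q \<in> C" "reduced (winv q @ winv q)" "winv q \<noteq> []"
    using assms carrier_winv cyc_winv by (auto simp: winv_def)
  show ?thesis using assms Phi_cp[of q] Phi_cp[OF w] inv_Phi[of q]
    by (auto simp: int_iter_def)
qed


lemma uc_UNIV_mono:
  assumes "uniformly_continuous_on UNIV (f :: 'b::metric_space \<Rightarrow> 'c::metric_space)"
  shows "uniformly_continuous_on A f"
  unfolding uniformly_continuous_on_def
proof (intro allI impI)
  fix e :: real assume "e > 0"
  then obtain d where "d > 0" "\<forall>x\<in>UNIV. \<forall>x'\<in>UNIV. dist x' x < d \<longrightarrow> dist (f x') (f x) < e"
    using assms unfolding uniformly_continuous_on_def by meson
  then show "\<exists>d>0. \<forall>x\<in>A. \<forall>x'\<in>A. dist x' x < d \<longrightarrow> dist (f x') (f x) < e" by auto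
qed

lemma uc_all:
  assumes uca: "unif_cont_action (free_group k) \<Phi>" and w: "w \<in> C"
  shows "uniformly_continuous_on UNIV (\<Phi> w)"
proof -
  obtain S' where S': "sym_gen_set (free_group k) S'" "\<forall>s\<in>S'. uniformly_continuous_on UNIV (\<Phi> s)"
    using uca unfolding unif_cont_action_def by blast
  have gen: "generate (free_group k) S' = C" and sub: "S' \<subseteq> C"
    and sym: "\<forall>s\<in>S'. inv\<^bsub>free_group k\<^esub> s \<in> S'"
    using S'(1) unfolding sym_gen_set_def by auto
  have "g \<in> C \<and> uniformly_continuous_on UNIV (\<Phi> g)" if "g \<in> generate (free_group k) S'" for g
    using that
  proof (induction g rule: generate.induct)
    case one
    have "uniformly_continuous_on UNIV (\<lambda>x::'a. x)" by (rule uniformly_continuous_on_id)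
    moreover have "\<Phi> [] = (\<lambda>x. x)" by (simp add: fun_eq_iff)
    ultimately show ?case by (simp add: carrier_fg)
  next
    case (incl h) then show ?case using sub S'(2) by blast
  next
    case (inv h)
    then have "inv\<^bsub>free_group k\<^esub> h \<in> S'" using sym by blast
    then show ?case using sub S'(2) by blast
  next
    case (eng h1 h2)
    have c1: "h1 \<in> C" "h2 \<in> C" using eng.IH by auto
    have e: "\<Phi> (h1 \<otimes>\<^bsub>free_group k\<^esub> h2) = (\<lambda>x. \<Phi> h1 (\<Phi> h2 x))"
      using Phi_mult[OF c1] by (simp add: fun_eq_iff)
    have u2: "uniformly_continuous_on (range (\<Phi> h2)) (\<Phi> h1)"
      using eng.IH uc_UNIV_mono by blast
    have "uniformly_continuous_on UNIV (\<lambda>x. \<Phi> h1 (\<Phi> h2 x))"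
      by (rule uniformly_continuous_on_compose) (use eng.IH u2 in simp_all)
    moreover have "h1 \<otimes>\<^bsub>free_group k\<^esub> h2 \<in> C" using carrier_mult[OF c1] by simp
    ultimately show ?case using e by simp
  qed
  then show ?thesis using w gen by auto
qed

lemma uc_dist:
  assumes "uniformly_continuous_on UNIV f" "e > 0"
  shows "\<exists>d>0. \<forall>x y. dist x y < d \<longrightarrow> dist (f x) (f y) < e"
proof -
  obtain d where "d > 0" "\<forall>x\<in>UNIV. \<forall>x'\<in>UNIV. dist x' x < d \<longrightarrow> dist (f x') (f x) < e"
    using assms unfolding uniformly_continuous_on_def by blast
  then show ?thesis by (intro exI[of _ d]) (simp add: dist_commute)
qed

context
  fixes p q :: word
  assumes hC: "p @ q @ winv p \<in> C" and qne: "q \<noteq> []" and cyc: "reduced (q @ q)"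
begin

lemma pq_carrier: "p \<in> C" "q \<in> C" "winv p \<in> C" "q @ winv p \<in> C"
  using carrier_app[OF hC] carrier_app[of q "winv p"] by auto

lemma conj_eq: "\<Phi> (p @ q @ winv p) (\<Phi> p x) = \<Phi> p (\<Phi> q x)"
  using Phi_app[OF hC] Phi_app[OF pq_carrier(4)] Phi_winv2[OF pq_carrier(1)] by simp

lemma conj_eq': "\<Phi> q (\<Phi> (winv p) y) = \<Phi> (winv p) (\<Phi> (p @ q @ winv p) y)"
  using conj_eq[of "\<Phi> (winv p) y"] Phi_winv1[OF pq_carrier(1)] Phi_winv2[OF pq_carrier(1)]
  by metis

lemma expansive_conj:
  assumes uca: "unif_cont_action (free_group k) \<Phi>" and ex: "expansive (\<Phi> (p @ q @ winv p))"
  shows "expansive (\<Phi> q)"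
proof -
  let ?H = "\<Phi> (p @ q @ winv p)"
  obtain D where D: "D > 0" "\<And>x1 x2. (\<forall>j. dist (int_iter ?H j x1) (int_iter ?H j x2) < D) \<Longrightarrow> x1 = x2"
    using ex unfolding expansive_def by blast
  obtain d where d: "d > 0" "\<And>x y. dist x y < d \<Longrightarrow> dist (\<Phi> p x) (\<Phi> p y) < D"
    using uc_dist[OF uc_all[OF uca pq_carrier(1)] D(1)] by blast
  have ic: "int_iter ?H j (\<Phi> p x) = \<Phi> p (int_iter (\<Phi> q) j x)" for j x
    by (rule int_iter_conj) (use bij_Phi hC pq_carrier conj_eq in auto)
  show ?thesis unfolding expansive_def
  proof (intro exI[of _ d] conjI allI impI)
    fix x1 x2 assume a: "\<forall>j. dist (int_iter (\<Phi> q) j x1) (int_iter (\<Phi> q) j x2) < d"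
    have "\<Phi> p x1 = \<Phi> p x2" by (rule D(2)) (use a d(2) ic in auto)
    then show "x1 = x2" using inj_Phi[OF pq_carrier(1)] by (meson injD)
  qed (rule d(1))
qed

lemma shadowing_conj:
  assumes uca: "unif_cont_action (free_group k) \<Phi>" and sh: "homeo_shadowing (\<Phi> q)"
  shows "homeo_shadowing (\<Phi> (p @ q @ winv p))"
proof -
  let ?H = "\<Phi> (p @ q @ winv p)" and ?F = "\<Phi> q" and ?B = "\<Phi> p" and ?B' = "\<Phi> (winv p)"
  have ic: "int_iter ?F j (?B' y) = ?B' (int_iter ?H j y)" for j y
    by (rule int_iter_conj) (use bij_Phi hC pq_carrier conj_eq' in auto)
  have ic2: "int_iter ?H j (?B z) = ?B (int_iter ?F j z)" for j z
    by (rule int_iter_conj) (use bij_Phi hC pq_carrier conj_eq in auto)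
  have invF: "inv_into UNIV ?F (?B' y) = ?B' (inv_into UNIV ?H y)" for y
    using ic[of "-1" y] by (simp add: int_iter_def)
  show ?thesis unfolding homeo_shadowing_def
  proof (intro allI impI)
    fix e :: real assume e: "e > 0"
    obtain eta where eta: "eta > 0" "\<And>x y. dist x y < eta \<Longrightarrow> dist (?B x) (?B y) < e"
      using uc_dist[OF uc_all[OF uca pq_carrier(1)] e] by blast
    obtain d' where d': "d' > 0" "\<And>x. (\<forall>j. dist (x (j + 1)) (?F (x j)) < d' \<and> dist (x (j - 1)) (inv_into UNIV ?F (x j)) < d')
        \<Longrightarrow> (\<exists>u. \<forall>j. dist (x j) (int_iter ?F j u) < eta)"
      using sh eta(1) unfolding homeo_shadowing_def by meson
    obtain d where d: "d > 0" "\<And>x y. dist x y < d \<Longrightarrow> dist (?B' x) (?B' y) < d'"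
      using uc_dist[OF uc_all[OF uca pq_carrier(3)] d'(1)] by blast
    show "\<exists>d>0. \<forall>x. (\<forall>j. dist (x (j + 1)) (?H (x j)) < d \<and> dist (x (j - 1)) (inv_into UNIV ?H (x j)) < d) \<longrightarrow>
        (\<exists>u. \<forall>j. dist (x j) (int_iter ?H j u) < e)"
    proof (intro exI[of _ d] conjI allI impI)
      fix x :: "int \<Rightarrow> 'a"
      assume a: "\<forall>j. dist (x (j + 1)) (?H (x j)) < d \<and> dist (x (j - 1)) (inv_into UNIV ?H (x j)) < d"
      define x' where "x' j = ?B' (x j)" for j
      have "\<forall>j. dist (x' (j + 1)) (?F (x' j)) < d' \<and> dist (x' (j - 1)) (inv_into UNIV ?F (x' j)) < d'"
        unfolding x'_def using a d(2) conj_eq' invF by auto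
      then obtain z where z: "\<And>j. dist (x' j) (int_iter ?F j z) < eta" using d'(2) by blast
      have "dist (x j) (int_iter ?H j (?B z)) < e" for j
        using eta(2)[OF z[of j]] ic2 Phi_winv1[OF pq_carrier(1)] unfolding x'_def by simp
      then show "\<exists>u. \<forall>j. dist (x j) (int_iter ?H j u) < e" by blast
    qed (rule d(1))
  qed
qed

end

end

lemma cyc_decomp: "reduced h \<Longrightarrow> h \<noteq> [] \<Longrightarrow> \<exists>p q. h = p @ q @ winv p \<and> q \<noteq> [] \<and> reduced (q @ q)"
proof (induction h rule: length_induct)
  case (1 h)
  show ?case
  proof (cases "reduced (h @ h)")
    case True then show ?thesis using 1 by (intro exI[of _ "[]"] exI[of _ h]) auto
  next
    case False
    then have hl: "hd h = inv_letter (last h)" using 1(2) by (auto simp: reduced_append)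
    obtain a t where h: "h = a # t" using 1(3) by (cases h) auto
    have tne: "t \<noteq> []" using False h by auto
    obtain m b where t: "t = m @ [b]" using tne by (metis append_butlast_last_id)
    have ab: "a = inv_letter b" using hl h t by simp
    have mne: "m \<noteq> []" using 1(2) h t ab by auto
    have rm: "reduced m" using 1(2) h t by (simp add: reduced_Cons reduced_append)
    have "length m < length h" using h t by simp
    then obtain p q where pq: "m = p @ q @ winv p" "q \<noteq> []" "reduced (q @ q)"
      using 1(1) rm mne by blast
    show ?thesis using pq h t ab by (intro exI[of _ "a # p"] exI[of _ q]) auto
  qed
qed


lemma exists_close:
  fixes x :: "'b::metric_space" and f :: "'i \<Rightarrow> 'b \<Rightarrow> 'c::metric_space"
  assumes lp: "x islimpt UNIV" and fin: "finite A" and cont: "\<And>a. a \<in> A \<Longrightarrow> isCont (f a) x" and d: "d > 0"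
  shows "\<exists>x'. x' \<noteq> x \<and> (\<forall>a\<in>A. dist (f a x') (f a x) < d)"
proof -
  have "\<forall>a\<in>A. eventually (\<lambda>y. dist (f a y) (f a x) < d) (at x)"
    using cont d by (auto simp: isCont_def tendsto_iff)
  then have "eventually (\<lambda>y. \<forall>a\<in>A. dist (f a y) (f a x) < d) (at x)"
    using fin by (simp add: eventually_ball_finite)
  then obtain r where r: "r > 0" "\<And>y. 0 < dist y x \<Longrightarrow> dist y x < r \<Longrightarrow> \<forall>a\<in>A. dist (f a y) (f a x) < d"
    unfolding eventually_at by auto
  obtain y where "y \<noteq> x" "dist y x < r" using lp r(1) unfolding islimpt_approachable by blast
  then show ?thesis using r(2)[of y] by auto
qed

lemma last_word_mult:
  assumes "length g > length s"
  shows "word_mult s g \<noteq> [] \<and> last (word_mult s g) = last g"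
proof -
  obtain p where p: "word_mult s g = p @ drop (length s) g" using word_mult_drop by blast
  have "drop (length s) g \<noteq> []" using assms by simp
  then show ?thesis using p by (simp add: last_drop)
qed

context frees
begin

definition ipow :: "word \<Rightarrow> int \<Rightarrow> word" where
  "ipow q j = (if 0 \<le> j then cp q (nat j) else cp (winv q) (nat (- j)))"

lemma ipow_props:
  assumes q: "q \<in> C" "q \<noteq> []" "reduced (q @ q)"
    and u: "u \<in> C" "u \<noteq> []" "hd u \<noteq> inv_letter (last q)" "hd u \<noteq> hd q"
  shows "ipow q j @ u \<in> C" "\<Phi> (ipow q j @ u) x = int_iter (\<Phi> q) j (\<Phi> u x)"
    "last (ipow q j @ u) = last u"
proof -
  have w: "winv q \<in> C" "reduced (winv q @ winv q)" "winv q \<noteq> []"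
    using q carrier_winv cyc_winv by (auto simp: winv_def)
  have lw: "last (winv q) = inv_letter (hd q)" using q(2) by (rule last_winv)
  have ipC: "ipow q j \<in> C" unfolding ipow_def using carrier_cp[OF q(1) q(3) q(2)] carrier_cp[OF w(1) w(2) w(3)] by simp
  have hl: "ipow q j \<noteq> [] \<Longrightarrow> hd u \<noteq> inv_letter (last (ipow q j))"
  proof -
    assume ne: "ipow q j \<noteq> []"
    show ?thesis
    proof (cases "0 \<le> j")
      case True
      then have "nat j > 0" using ne cp_nil_iff[OF q(2)] by (auto simp: ipow_def)
      then show ?thesis using True u(3) q(2) by (simp add: ipow_def last_cp)
    next
      case False
      then have "nat (-j) > 0" by simp
      then show ?thesis using False u(4) w(3) lw by (simp add: ipow_def last_cp)
    qed
  qed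
  show c: "ipow q j @ u \<in> C" using ipC u(1) hl by (auto simp: carrier_fg reduced_append)
  show "\<Phi> (ipow q j @ u) x = int_iter (\<Phi> q) j (\<Phi> u x)"
    using Phi_app[OF c] int_iter_Phi[OF q(1) q(3) q(2)] by (simp add: ipow_def)
  show "last (ipow q j @ u) = last u" using u(2) by simp
qed

lemma part1_cyc:
  assumes k2: "k \<ge> 2" and lp: "x0 islimpt (UNIV::'a set)" and Sfin: "finite S" "S \<subseteq> C"
    and sh: "action_shadowing (free_group k) S \<Phi>"
    and q: "q \<in> C" "q \<noteq> []" "reduced (q @ q)" and ex: "expansive (\<Phi> q)"
  shows False
proof -
  obtain D where D: "D > 0" "\<And>x1 x2. (\<forall>j. dist (int_iter (\<Phi> q) j x1) (int_iter (\<Phi> q) j x2) < D) \<Longrightarrow> x1 = x2"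
    using ex unfolding expansive_def by blast
  obtain d where d: "d > 0" "\<And>y. pseudotrajectory (free_group k) S \<Phi> d y \<Longrightarrow>
      (\<exists>x. \<forall>g \<in> C. dist (y g) (\<Phi> g x) < D)"
    using sh D(1) unfolding action_shadowing_def by meson
  define L where "L = Max (insert 0 (length ` S))"
  have L: "length s \<le> L" if "s \<in> S" for s
    unfolding L_def by (rule Max_ge) (use Sfin(1) that in simp_all)
  define A where "A = S \<times> {g::word. set g \<subseteq> {0..<k} \<times> UNIV \<and> length g \<le> L}"
  have f0: "finite ({0..<k} \<times> (UNIV::bool set))" by simp
  have finA: "finite A" unfolding A_def
    using Sfin(1) finite_lists_length_le[OF f0, of L] by (intro finite_cartesian_product) auto
  have contA: "isCont (\<lambda>z. \<Phi> (word_mult (fst a) (snd a)) z) x0" if "a \<in> A \<inter> (S \<times> C)" for a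
  proof -
    have "word_mult (fst a) (snd a) \<in> C" using that Sfin(2) carrier_mult by auto
    then have "continuous_on UNIV (\<Phi> (word_mult (fst a) (snd a)))" by (rule cont_Phi)
    then show ?thesis by (simp add: continuous_on_eq_continuous_at)
  qed
  obtain x' where x': "x' \<noteq> x0" "\<forall>a\<in>A \<inter> (S \<times> C). dist (\<Phi> (word_mult (fst a) (snd a)) x') (\<Phi> (word_mult (fst a) (snd a)) x0) < d"
  proof -
    have "finite (A \<inter> (S \<times> C))" using finA by simp
    from exists_close[where f="\<lambda>a z. \<Phi> (word_mult (fst a) (snd a)) z", OF lp this contA d(1)]
    show ?thesis using that by blast
  qed
  obtain r1 where r1: "r1 \<in> {(0,True),(0,False),(1,True)}" "r1 \<noteq> inv_letter (last q)" "r1 \<noteq> hd q"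
  proof -
    have "\<exists>r\<in>{(0::nat,True),(0,False),(1,True)}. r \<noteq> inv_letter (last q) \<and> r \<noteq> hd q"
      by (cases "inv_letter (last q) = (0, True)"; cases "hd q = (0, True)";
          cases "inv_letter (last q) = (0, False)"; cases "hd q = (0, False)") auto
    then show ?thesis using that by blast
  qed
  define c :: letter where "c = (if fst r1 = 0 then 1 else 0, True)"
  have r1k: "fst r1 < k" "fst c < k" using r1(1) k2 by (auto simp: c_def)
  have cr: "c \<noteq> r1" "c \<noteq> inv_letter r1" by (auto simp: c_def inv_letter_def prod_eq_iff)
  define side where "side g \<longleftrightarrow> g \<noteq> [] \<and> last g = r1" for g :: word
  define y where "y g = (if side g then \<Phi> g x' else \<Phi> g x0)" for g
  have pt: "pseudotrajectory (free_group k) S \<Phi> d y"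
    unfolding pseudotrajectory_def
  proof (intro ballI)
    fix s g assume s: "s \<in> S" and g: "g \<in> C"
    have sC: "s \<in> C" using s Sfin(2) by auto
    have e: "\<Phi> s (\<Phi> g z) = \<Phi> (word_mult s g) z" for z using Phi_mult[OF sC g] by simp
    show "dist (y (s \<otimes>\<^bsub>free_group k\<^esub> g)) (\<Phi> s (y g)) < d"
    proof (cases "side (word_mult s g) = side g")
      case True then show ?thesis using e d(1) by (simp add: y_def)
    next
      case False
      have "\<not> length s < length g"
      proof
        assume "length s < length g"
        then have "word_mult s g \<noteq> [] \<and> last (word_mult s g) = last g" by (rule last_word_mult)
        moreover have "g \<noteq> []" using \<open>length s < length g\<close> by auto
        ultimately show False using False by (simp add: side_def)
      qed
      then have "length g \<le> length s" by simp
      then have "(s, g) \<in> A \<inter> (S \<times> C)" using s g L[OF s] by (auto simp: A_def carrier_fg)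
      then have "dist (\<Phi> (word_mult s g) x') (\<Phi> (word_mult s g) x0) < d"
        using bspec[OF x'(2)] by fastforce
      then show ?thesis using e False by (auto simp: y_def dist_commute)
    qed
  qed
  then obtain z where z: "\<And>g. g \<in> C \<Longrightarrow> dist (y g) (\<Phi> g z) < D" using d(2) by blast
  have key: "\<Phi> u w = \<Phi> u z" if u: "u \<in> C" "u \<noteq> []" "hd u = r1" and yw: "\<And>j. y (ipow q j @ u) = \<Phi> (ipow q j @ u) w" for u w
  proof (rule D(2), intro allI)
    fix j
    have u': "hd u \<noteq> inv_letter (last q)" "hd u \<noteq> hd q" using u r1 by auto
    note ip = ipow_props[OF q u(1) u(2) u']
    show "dist (int_iter (\<Phi> q) j (\<Phi> u w)) (int_iter (\<Phi> q) j (\<Phi> u z)) < D"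
      using z[OF ip(1)[of j]] yw[of j] ip(2)[of j w] ip(2)[of j z] by simp
  qed
  have uC: "[r1, c] \<in> C" "[r1] \<in> C" using r1k cr by (auto simp: carrier_fg)
  have "\<Phi> [r1, c] x0 = \<Phi> [r1, c] z"
  proof (rule key[OF uC(1)])
    fix j
    have "\<not> side (ipow q j @ [r1, c])" using cr by (simp add: side_def)
    then show "y (ipow q j @ [r1, c]) = \<Phi> (ipow q j @ [r1, c]) x0" by (simp add: y_def)
  qed simp_all
  then have "x0 = z" using inj_Phi[OF uC(1)] by (meson injD)
  moreover have "\<Phi> [r1] x' = \<Phi> [r1] z"
  proof (rule key[OF uC(2)])
    fix j
    have "side (ipow q j @ [r1])" by (simp add: side_def)
    then show "y (ipow q j @ [r1]) = \<Phi> (ipow q j @ [r1]) x'" by (simp add: y_def)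
  qed simp_all
  then have "x' = z" using inj_Phi[OF uC(2)] by (meson injD)
  ultimately show False using x'(1) by simp
qed

end


section \<open>Maximal power suffixes\<close>

definition Jc :: "word \<Rightarrow> word \<Rightarrow> nat" where
  "Jc c g = (GREATEST j. \<exists>w. g = w @ cp c j)"

lemma Jc_bound: "c \<noteq> [] \<Longrightarrow> g = w @ cp c j \<Longrightarrow> j \<le> length g"
proof -
  assume "c \<noteq> []" "g = w @ cp c j"
  then have "j * length c \<le> length g" by simp
  moreover have "length c \<ge> 1" using \<open>c \<noteq> []\<close> by (cases c) auto
  then have "j \<le> j * length c" by simp
  ultimately show ?thesis by linarith
qed

lemma Jc_ex: "c \<noteq> [] \<Longrightarrow> \<exists>w. g = w @ cp c (Jc c g)"
  unfolding Jc_def by (rule GreatestI_nat[of _ 0 "length g"]) (auto intro: Jc_bound)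

lemma Jc_ge:
  assumes c: "c \<noteq> []" and g: "g = w @ cp c j" shows "j \<le> Jc c g"
  unfolding Jc_def
proof (rule Greatest_le_nat[of _ j "length g"])
  show "\<exists>w'. g = w' @ cp c j" using g by blast
  show "\<And>y. (\<exists>w. g = w @ cp c y) \<Longrightarrow> y \<le> length g" using Jc_bound[OF c] by blast
qed

lemma Jc_len: "c \<noteq> [] \<Longrightarrow> Jc c g * length c \<le> length g"
proof -
  assume c: "c \<noteq> []"
  obtain w where "g = w @ cp c (Jc c g)" using Jc_ex[OF c] by blast
  then have "length g = length w + Jc c g * length c" by (metis length_append length_cp)
  then show ?thesis by linarith
qed

lemma Jc_le: "c \<noteq> [] \<Longrightarrow> Jc c g \<le> length g"
  using Jc_ex[of c g] Jc_bound by blast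

lemma suffix_split:
  assumes "xs @ ys = zs @ c" "length ys \<ge> length c"
  shows "\<exists>w. ys = w @ c"
proof -
  have "drop (length ys - length c) ys = drop (length (xs @ ys) - length c) (xs @ ys)"
    using assms(2) by simp
  also have "\<dots> = c" using assms(1) by simp
  finally have "ys = take (length ys - length c) ys @ c" by (metis append_take_drop_id)
  then show ?thesis by blast
qed

lemma K2:
  assumes c: "c \<noteq> []" and g: "g = w @ cp c j" and j: "j = Jc c g"
    and sm: "word_mult s g = p @ drop (length s) g" and lw: "length w \<ge> length s + length c"
  shows "Jc c (word_mult s g) = j \<and> word_mult s g = (p @ drop (length s) w) @ cp c j"
proof -
  have sg: "word_mult s g = (p @ drop (length s) w) @ cp c j" using sm g lw by simp
  have ge: "j \<le> Jc c (word_mult s g)" using Jc_ge[OF c sg] .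
  have le: "\<not> j < Jc c (word_mult s g)"
  proof
    define J' where "J' = Jc c (word_mult s g)"
    assume "j < Jc c (word_mult s g)"
    then have lt: "j < J'" by (simp add: J'_def)
    obtain w'' where w'': "word_mult s g = w'' @ cp c J'" using Jc_ex[OF c] unfolding J'_def by blast
    have "cp c J' = cp c (J' - Suc j) @ cp c (Suc j)"
      using lt cp_add[of c "J' - Suc j" "Suc j"] by simp
    then have "(p @ drop (length s) w) @ cp c j = (w'' @ cp c (J' - Suc j) @ c) @ cp c j"
      using w'' sg by (simp add: cp_Suc)
    then have "p @ drop (length s) w = (w'' @ cp c (J' - Suc j)) @ c" by simp
    moreover have "length (drop (length s) w) \<ge> length c" using lw by simp
    ultimately obtain w4 where w4: "drop (length s) w = w4 @ c" using suffix_split by blast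
    have "g = (take (length s) w @ w4) @ cp c (Suc j)"
      using g w4 by (metis append.assoc append_take_drop_id cp_Suc)
    then have "Suc j \<le> Jc c g" by (rule Jc_ge[OF c])
    then show False using j by simp
  qed
  show ?thesis using ge le sg by simp
qed

definition Jq :: "word \<Rightarrow> word \<Rightarrow> int" where
  "Jq q g = int (Jc q g) - int (Jc (winv q) g)"

definition remq :: "word \<Rightarrow> word \<Rightarrow> word" where
  "remq q g = take (length g - length q * (Jc q g + Jc (winv q) g)) g"

lemma Jc_excl:
  assumes q: "q \<noteq> []" "reduced (q @ q)"
  shows "Jc q g = 0 \<or> Jc (winv q) g = 0"
proof (rule ccontr)
  assume "\<not> ?thesis"
  then have a: "Jc q g > 0" "Jc (winv q) g > 0" by auto
  have wq: "winv q \<noteq> []" using q(1) by (cases q) auto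
  obtain w1 where w1: "g = w1 @ cp q (Jc q g)" using Jc_ex[OF q(1)] by blast
  obtain w2 where w2: "g = w2 @ cp (winv q) (Jc (winv q) g)" using Jc_ex[OF wq] by blast
  have "last g = last q" using w1 a(1) q(1) by (metis last_appendR last_cp cp_nil_iff neq0_conv)
  moreover have "last g = last (winv q)" using w2 a(2) wq by (metis last_appendR last_cp cp_nil_iff neq0_conv)
  moreover have "last (winv q) = inv_letter (hd q)" using q(1) by (rule last_winv)
  moreover have "hd q \<noteq> inv_letter (last q)" using q by (simp add: reduced_append)
  ultimately show False by (metis inv_inv)
qed

lemma remq_decomp:
  assumes q: "q \<noteq> []" "reduced (q @ q)"
  shows "g = remq q g @ cp q (Jc q g) @ cp (winv q) (Jc (winv q) g)"
    and "length (remq q g) = length g - length q * (Jc q g + Jc (winv q) g)"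
    and "length q * (Jc q g + Jc (winv q) g) \<le> length g"
proof -
  have wq: "winv q \<noteq> []" using q(1) by (cases q) auto
  have lwq: "length (winv q) = length q" by simp
  have "g = remq q g @ cp q (Jc q g) @ cp (winv q) (Jc (winv q) g) \<and>
        length q * (Jc q g + Jc (winv q) g) \<le> length g"
  proof (cases "Jc (winv q) g = 0")
    case True
    obtain w where w: "g = w @ cp q (Jc q g)" using Jc_ex[OF q(1)] by blast
    have "remq q g = w" unfolding remq_def True using w by (metis add_0_right append_eq_conv_conj length_append length_cp mult.commute diff_add_inverse2)
    then show ?thesis using True w Jc_len[OF q(1), of g] by (simp add: mult.commute)
  next
    case False
    have J0: "Jc q g = 0" using Jc_excl[OF q, of g] False by linarith
    obtain w where w: "g = w @ cp (winv q) (Jc (winv q) g)" using Jc_ex[OF wq] by blast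
    have "remq q g = w" unfolding remq_def J0 using w lwq
      by (metis add_0 append_eq_conv_conj length_append length_cp mult.commute diff_add_inverse2)
    then show ?thesis using J0 w lwq Jc_len[OF wq, of g] by (simp add: mult.commute)
  qed
  then show "g = remq q g @ cp q (Jc q g) @ cp (winv q) (Jc (winv q) g)"
    and "length q * (Jc q g + Jc (winv q) g) \<le> length g" by auto
  then show "length (remq q g) = length g - length q * (Jc q g + Jc (winv q) g)"
    by (simp add: remq_def)
qed


lemma J_stable:
  assumes q: "q \<noteq> []" "reduced (q @ q)" and lw: "length (remq q g) \<ge> length s + length q"
  shows "Jq q (word_mult s g) = Jq q g"
proof -
  obtain p where sm: "word_mult s g = p @ drop (length s) g" using word_mult_drop by blast
  have wq: "winv q \<noteq> []" using q(1) by (cases q) auto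
  have lw': "length (remq q g) \<ge> length s + length (winv q)" using lw by simp
  note dec = remq_decomp(1)[OF q, of g]
  show ?thesis
  proof (cases "Jc (winv q) g = 0")
    case True
    have g1: "g = remq q g @ cp q (Jc q g)" using dec True by simp
    have a: "Jc q (word_mult s g) = Jc q g" using conjunct1[OF K2[OF q(1) g1 refl sm lw]] .
    show ?thesis
    proof (cases "Jc q g = 0")
      case True2: True
      have g2: "g = remq q g @ cp (winv q) 0" using g1 True2 by simp
      have "Jc (winv q) (word_mult s g) = 0" using conjunct1[OF K2[OF wq g2 _ sm lw']] True by simp
      then show ?thesis using a True by (simp add: Jq_def)
    next
      case False
      then have "Jc (winv q) (word_mult s g) = 0" using a Jc_excl[OF q, of "word_mult s g"] by simp
      then show ?thesis using a True by (simp add: Jq_def)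
    qed
  next
    case False
    then have a0: "Jc q g = 0" using Jc_excl[OF q, of g] by linarith
    have g1: "g = remq q g @ cp (winv q) (Jc (winv q) g)" using dec a0 by simp
    have b: "Jc (winv q) (word_mult s g) = Jc (winv q) g" using conjunct1[OF K2[OF wq g1 refl sm lw']] .
    then have "Jc q (word_mult s g) = 0" using False Jc_excl[OF q, of "word_mult s g"] by simp
    then show ?thesis using a0 b by (simp add: Jq_def)
  qed
qed

lemma big:
  fixes L :: nat
  assumes c: "c \<noteq> []" and g: "g = w @ cp c j" and j: "j = Jc c g" and sL: "length s \<le> L"
    and wl: "length w < L + length c" and gl: "length g > 4 * L + 4 * length c"
  shows "Jc c (word_mult s g) \<ge> 1 \<and> j \<le> Jc c (word_mult s g) + L + 1 \<and> Jc c (word_mult s g) \<le> j + 3 * L + 1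
    \<and> (\<exists>w'. word_mult s g = w' @ cp c (Jc c (word_mult s g)) \<and> length w' \<le> 4 * L + 2 * length c)"
proof -
  define m where "m = length c"
  have m1: "m \<ge> 1" using c by (cases c) (auto simp: m_def)
  define j' where "j' = Jc c (word_mult s g)"
  obtain p where sm: "word_mult s g = p @ drop (length s) g" and pl: "length p \<le> 2 * length s"
    using word_mult_drop by blast
  have lsg: "length (word_mult s g) \<le> 2 * L + length g" using length_word_mult[of s g] sL by linarith
  define a where "a = L div m + 1"
  have am1: "a * m > L"
  proof -
    have "L mod m < m" using m1 by simp
    moreover have "L = L div m * m + L mod m" by simp
    moreover have "a * m = L div m * m + m" by (simp add: a_def algebra_simps)
    ultimately show ?thesis by linarith
  qed
  have am2: "a * m \<le> L + m" unfolding a_def using div_mult_mod_eq[of L m] by (simp add: algebra_simps)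
  have lg: "length g = length w + j * m" using g by (simp add: m_def)
  have jm: "j * m > a * m" using lg gl wl am2 unfolding m_def by linarith
  then have ja: "j > a" by (meson mult_less_cancel2)
  have g2: "g = (w @ cp c a) @ cp c (j - a)" using g ja cp_add[of c a "j - a"] by simp
  have lw1: "length (w @ cp c a) \<ge> length s" using am1 sL by (simp add: m_def)
  have sg2: "word_mult s g = (p @ drop (length s) (w @ cp c a)) @ cp c (j - a)"
    using sm g2 lw1 by simp
  have j'1: "j - a \<le> j'" unfolding j'_def using Jc_ge[OF c sg2] .
  have j'2: "j' * m \<le> length (word_mult s g)" using Jc_len[OF c] by (simp add: j'_def m_def)
  have up: "j' \<le> j + 3 * L + 1"
  proof (rule ccontr)
    assume "\<not> ?thesis"
    then have "j' \<ge> j + (3 * L + 2)" by simp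
    then have "j' * m \<ge> (j + (3 * L + 2)) * m" by (rule mult_le_mono1)
    moreover have "(3 * L + 2) * m \<ge> 3 * L + 2 * m" using m1 by (simp add: algebra_simps)
    moreover have "(j + (3 * L + 2)) * m = j * m + (3 * L + 2) * m" by (simp add: algebra_simps)
    ultimately have "j' * m \<ge> j * m + 3 * L + 2 * m" by linarith
    then show False using j'2 lsg lg wl by (simp add: m_def)
  qed
  obtain w' where w': "word_mult s g = w' @ cp c j'" using Jc_ex[OF c] unfolding j'_def by blast
  have "(j - a) * m \<le> j' * m" using j'1 by (rule mult_le_mono1)
  moreover have "(j - a) * m + a * m = j * m" using ja by (simp add: add_mult_distrib[symmetric])
  moreover have "length w' + j' * m = length (word_mult s g)" using w' by (simp add: m_def)
  moreover have "length w < L + m" using wl by (simp add: m_def)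
  ultimately have "length w' \<le> 4 * L + 2 * m" using lsg lg am2 by linarith
  moreover have "a \<le> L + 1" unfolding a_def by simp
  ultimately show ?thesis using j'1 ja up w' unfolding j'_def m_def by auto
qed

lemma Jq_abs: "q \<noteq> [] \<Longrightarrow> reduced (q @ q) \<Longrightarrow> \<bar>Jq q g\<bar> \<le> int (length g)"
  using Jc_le[of q g] Jc_le[of "winv q" g] Jc_excl[of q g] by (cases q) (auto simp: Jq_def)

lemma cross:
  fixes L :: nat
  assumes q: "q \<noteq> []" "reduced (q @ q)" and sL: "length s \<le> L"
    and ne: "Jq q (word_mult s g) \<noteq> Jq q g"
  shows "\<bar>Jq q (word_mult s g) - Jq q g\<bar> \<le> int (10 * L + 8 * length q)
     \<and> length (remq q (word_mult s g)) \<le> 6 * L + 4 * length q"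
proof -
  let ?sg = "word_mult s g" and ?m = "length q"
  have wq: "winv q \<noteq> []" using q(1) by (cases q) auto
  have m1: "length q \<ge> 1" using q(1) by (cases q) auto
  have rl: "length (remq q g) < L + ?m" using J_stable[OF q, of s g] ne sL by linarith
  have lsg: "length ?sg \<le> 2 * L + length g" using length_word_mult[of s g] sL by linarith
  show ?thesis
  proof (cases "length g \<le> 4 * L + 4 * ?m")
    case True
    have "\<bar>Jq q ?sg - Jq q g\<bar> \<le> int (length ?sg) + int (length g)"
      using Jq_abs[OF q, of ?sg] Jq_abs[OF q, of g] by linarith
    moreover have "length (remq q ?sg) \<le> length ?sg" by (simp add: remq_def)
    ultimately show ?thesis using True lsg by linarith
  next
    case False
    note dec = remq_decomp[OF q, of g]
    note decs = remq_decomp[OF q, of ?sg]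
    show ?thesis
    proof (cases "Jc (winv q) g = 0")
      case True
      have g1: "g = remq q g @ cp q (Jc q g)" using dec True by simp
      note B = big[OF q(1) g1 refl sL rl] False
      have B1: "Jc q ?sg \<ge> 1" using B by simp
      then have z: "Jc (winv q) ?sg = 0" using Jc_excl[OF q, of ?sg] by simp
      obtain w' where w': "?sg = w' @ cp q (Jc q ?sg)" "length w' \<le> 4 * L + 2 * ?m" using B by auto
      have "length (remq q ?sg) = length w'" using decs(2) z w'(1)
        by (metis add_0_right diff_add_inverse2 length_append length_cp mult.commute)
      moreover have "Jq q ?sg - Jq q g = int (Jc q ?sg) - int (Jc q g)" using True z by (simp add: Jq_def)
      moreover have "int (Jc q ?sg) \<le> int (Jc q g) + 3 * int L + 1" using B by linarith
      moreover have "int (Jc q g) \<le> int (Jc q ?sg) + int L + 1" using B by linarith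
      ultimately show ?thesis using w'(2) m1 unfolding abs_le_iff by (intro conjI; linarith)
    next
      case False2: False
      then have a0: "Jc q g = 0" using Jc_excl[OF q, of g] by linarith
      have g1: "g = remq q g @ cp (winv q) (Jc (winv q) g)" using dec a0 by simp
      have rl': "length (remq q g) < L + length (winv q)" using rl by simp
      have gl': "length g > 4 * L + 4 * length (winv q)" using False by simp
      note B = big[OF wq g1 refl sL rl' gl']
      have B1: "Jc (winv q) ?sg \<ge> 1" using B by simp
      then have z: "Jc q ?sg = 0" using Jc_excl[OF q, of ?sg] by simp
      obtain w' where w': "?sg = w' @ cp (winv q) (Jc (winv q) ?sg)" "length w' \<le> 4 * L + 2 * ?m" using B by auto
      have "length (remq q ?sg) = length w'" using decs(2) z w'(1)
        by (metis add_0 diff_add_inverse2 length_append length_cp mult.commute winv_simps(5))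
      moreover have "Jq q ?sg - Jq q g = int (Jc (winv q) g) - int (Jc (winv q) ?sg)" using a0 z by (simp add: Jq_def)
      moreover have "int (Jc (winv q) ?sg) \<le> int (Jc (winv q) g) + 3 * int L + 1" using B by linarith
      moreover have "int (Jc (winv q) g) \<le> int (Jc (winv q) ?sg) + int L + 1" using B by linarith
      ultimately show ?thesis using w'(2) m1 unfolding abs_le_iff by (intro conjI; linarith)
    qed
  qed
qed


lemma uc_dist2:
  assumes "uniformly_continuous_on UNIV f" "e > 0"
  shows "\<exists>d>0. \<forall>x y. dist x y < d \<longrightarrow> dist (f x) (f y) < e"
proof -
  obtain d where "d > 0" "\<forall>x\<in>UNIV. \<forall>x'\<in>UNIV. dist x' x < d \<longrightarrow> dist (f x') (f x) < e"
    using assms unfolding uniformly_continuous_on_def by blast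
  then show ?thesis by (intro exI[of _ d]) (simp add: dist_commute)
qed

lemma po_bound:
  fixes F :: "'b::metric_space \<Rightarrow> 'b"
  assumes bij: "bij F" and ucF: "uniformly_continuous_on UNIV F"
    and ucG: "uniformly_continuous_on UNIV (inv_into UNIV F)"
  shows "\<eta> > 0 \<Longrightarrow> \<exists>\<delta>>0. \<forall>x. (\<forall>j. dist (x (j + 1)) (F (x j)) < \<delta> \<and> dist (x (j - 1)) (inv_into UNIV F (x j)) < \<delta>)
     \<longrightarrow> (\<forall>j i. \<bar>i\<bar> \<le> int n \<longrightarrow> dist (x (j + i)) (int_iter F i (x j)) < \<eta>)"
proof (induction n arbitrary: \<eta>)
  case 0
  show ?case by (rule exI[of _ 1]) (use 0 in auto)
next
  case (Suc n)
  let ?G = "inv_into UNIV F"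
  have h: "\<eta> / 2 > 0" using Suc.prems by simp
  obtain e1 where e1: "e1 > 0" "\<And>a b. dist a b < e1 \<Longrightarrow> dist (F a) (F b) < \<eta> / 2"
    using uc_dist2[OF ucF h] by blast
  obtain e2 where e2: "e2 > 0" "\<And>a b. dist a b < e2 \<Longrightarrow> dist (?G a) (?G b) < \<eta> / 2"
    using uc_dist2[OF ucG h] by blast
  define e' where "e' = min \<eta> (min e1 e2)"
  have e'0: "e' > 0" using e1 e2 Suc.prems by (simp add: e'_def)
  obtain d1 where d1: "d1 > 0" "\<And>x. (\<forall>j. dist (x (j + 1)) (F (x j)) < d1 \<and> dist (x (j - 1)) (?G (x j)) < d1)
     \<Longrightarrow> (\<forall>j i. \<bar>i\<bar> \<le> int n \<longrightarrow> dist (x (j + i)) (int_iter F i (x j)) < e')"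
    using Suc.IH[OF e'0] by blast
  show ?case
  proof (intro exI[of _ "min d1 (\<eta> / 2)"] conjI allI impI)
    show "min d1 (\<eta> / 2) > 0" using d1(1) h by simp
    fix x :: "int \<Rightarrow> 'b" and j i :: int
    assume px: "\<forall>j. dist (x (j + 1)) (F (x j)) < min d1 (\<eta> / 2) \<and> dist (x (j - 1)) (?G (x j)) < min d1 (\<eta> / 2)"
      and iabs: "\<bar>i\<bar> \<le> int (Suc n)"
    have px1: "\<forall>j. dist (x (j + 1)) (F (x j)) < d1 \<and> dist (x (j - 1)) (?G (x j)) < d1" using px by auto
    note IH = d1(2)[OF px1]
    consider "\<bar>i\<bar> \<le> int n" | "i = int n + 1" | "i = - int n - 1" using iabs by linarith
    then show "dist (x (j + i)) (int_iter F i (x j)) < \<eta>"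
    proof cases
      case 1
      then show ?thesis using IH e'_def by fastforce
    next
      case 2
      have a: "dist (x (j + int n + 1)) (F (x (j + int n))) < \<eta> / 2" using px by auto
      have "dist (x (j + int n)) (int_iter F (int n) (x j)) < e1" using IH e'_def by fastforce
      then have b: "dist (F (x (j + int n))) (F (int_iter F (int n) (x j))) < \<eta> / 2" by (rule e1(2))
      have c: "int_iter F i (x j) = F (int_iter F (int n) (x j))" using 2 int_iter_succ[OF bij] by simp
      show ?thesis using a b c 2 dist_triangle[of "x (j + int n + 1)" "F (int_iter F (int n) (x j))" "F (x (j + int n))"]
        by (simp add: add.assoc)
    next
      case 3
      have a: "dist (x (j - int n - 1)) (?G (x (j - int n))) < \<eta> / 2" using px by auto
      have "\<bar>- int n\<bar> \<le> int n" by simp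
      then have "dist (x (j + - int n)) (int_iter F (- int n) (x j)) < e2" using IH e'_def by fastforce
      then have b: "dist (?G (x (j - int n))) (?G (int_iter F (- int n) (x j))) < \<eta> / 2" using e2(2) by simp
      have c: "int_iter F i (x j) = ?G (int_iter F (- int n) (x j))" using 3 int_iter_pred[OF bij, of "- int n"] by simp
      have "j + i = j - int n - 1" using 3 by simp
      then have ji: "x (j + i) = x (j - int n - 1)" by (rule arg_cong)
      show ?thesis using a b c ji dist_triangle[of "x (j - int n - 1)" "?G (int_iter F (- int n) (x j))" "?G (x (j - int n))"]
        by simp
    qed
  qed
qed

lemma uc_finite:
  fixes f :: "'i \<Rightarrow> 'b::metric_space \<Rightarrow> 'c::metric_space"
  assumes "finite W" "\<forall>w\<in>W. uniformly_continuous_on UNIV (f w)" "e > 0"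
  shows "\<exists>\<eta>>0. \<forall>w\<in>W. \<forall>a b. dist a b < \<eta> \<longrightarrow> dist (f w a) (f w b) < e"
  using assms
proof (induction W rule: finite_induct)
  case empty then show ?case by (intro exI[of _ 1]) auto
next
  case (insert w W)
  obtain n1 where n1: "n1 > 0" "\<forall>w\<in>W. \<forall>a b. dist a b < n1 \<longrightarrow> dist (f w a) (f w b) < e"
    using insert by auto
  obtain n2 where n2: "n2 > 0" "\<And>a b. dist a b < n2 \<Longrightarrow> dist (f w a) (f w b) < e"
    using uc_dist2[of "f w" e] insert by auto
  show ?case using n1 n2 by (intro exI[of _ "min n1 n2"]) auto
qed

context frees
begin

context
  fixes q :: word
  assumes qC: "q \<in> C" and qne: "q \<noteq> []" and qcyc: "reduced (q @ q)"
begin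

lemma Phi_rem: "g \<in> C \<Longrightarrow> \<Phi> g z = \<Phi> (remq q g) (int_iter (\<Phi> q) (Jq q g) z)"
proof -
  assume gC: "g \<in> C"
  let ?a = "Jc q g" and ?b = "Jc (winv q) g"
  have dec: "g = remq q g @ cp q ?a @ cp (winv q) ?b" by (rule remq_decomp(1)[OF qne qcyc])
  have c1: "remq q g @ (cp q ?a @ cp (winv q) ?b) \<in> C" using gC dec by simp
  have c2: "cp q ?a @ cp (winv q) ?b \<in> C" using carrier_app[OF c1] by blast
  have e: "\<Phi> g z = \<Phi> (remq q g) (\<Phi> (cp q ?a) (\<Phi> (cp (winv q) ?b) z))"
    using Phi_app[OF c1] Phi_app[OF c2] dec by metis
  note ii = int_iter_Phi[OF qC qcyc qne]
  show ?thesis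
  proof (cases "?b = 0")
    case True
    have "int_iter (\<Phi> q) (Jq q g) z = \<Phi> (cp q ?a) z" using ii[of "int ?a"] True by (simp add: Jq_def)
    then show ?thesis using e True by simp
  next
    case False
    then have a0: "?a = 0" using Jc_excl[OF qne qcyc, of g] by linarith
    have "int_iter (\<Phi> q) (Jq q g) z = \<Phi> (cp (winv q) ?b) z" using ii[of "- int ?b"] False a0 by (simp add: Jq_def)
    then show ?thesis using e a0 by simp
  qed
qed

lemma J_ipow: "Jq q (ipow q j) = j \<and> remq q (ipow q j) = []"
proof -
  have wq: "winv q \<noteq> []" using qne by (cases q) auto
  have m1: "length q \<ge> 1" using qne by (cases q) auto
  have "Jc c (cp c n) = n" if c: "c \<noteq> []" for c n
  proof -
    have "n \<le> Jc c (cp c n)" using Jc_ge[OF c, of "cp c n" "[]" n] by simp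
    moreover have "Jc c (cp c n) * length c \<le> n * length c" using Jc_len[OF c, of "cp c n"] by simp
    then have "Jc c (cp c n) \<le> n" using c by simp
    ultimately show ?thesis by simp
  qed
  note JJ = this
  show ?thesis
  proof (cases "0 \<le> j")
    case True
    let ?n = "nat j"
    have g: "ipow q j = cp q ?n" using True by (simp add: ipow_def)
    have a: "Jc q (cp q ?n) = ?n" by (rule JJ[OF qne])
    have b: "Jc (winv q) (cp q ?n) = 0"
    proof (cases "?n = 0")
      case True then show ?thesis using Jc_le[OF wq, of "cp q 0"] by simp
    next
      case False then show ?thesis using a Jc_excl[OF qne qcyc, of "cp q ?n"] by simp
    qed
    have "length (remq q (cp q ?n)) = 0" using remq_decomp(2)[OF qne qcyc, of "cp q ?n"] a b by simp
    then show ?thesis using g a b True by (simp add: Jq_def)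
  next
    case False
    let ?n = "nat (- j)"
    have g: "ipow q j = cp (winv q) ?n" using False by (simp add: ipow_def)
    have b: "Jc (winv q) (cp (winv q) ?n) = ?n" by (rule JJ[OF wq])
    have n0: "?n > 0" using False by simp
    have a: "Jc q (cp (winv q) ?n) = 0" using b n0 Jc_excl[OF qne qcyc, of "cp (winv q) ?n"] by simp
    have "length (remq q (cp (winv q) ?n)) = 0" using remq_decomp(2)[OF qne qcyc, of "cp (winv q) ?n"] a b by simp
    then show ?thesis using g a b False by (simp add: Jq_def)
  qed
qed

lemma ipow_carrier: "ipow q j \<in> C"
proof -
  have w: "winv q \<in> C" "reduced (winv q @ winv q)" "winv q \<noteq> []"
    using qC qne qcyc carrier_winv cyc_winv by (auto simp: winv_def)
  show ?thesis unfolding ipow_def using carrier_cp[OF qC qcyc qne] carrier_cp[OF w] by simp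
qed

end

end


context frees
begin

lemma part2_cyc:
  assumes uca: "unif_cont_action (free_group k) \<Phi>" and Sfin: "finite S" "S \<subseteq> C"
    and sh: "action_shadowing (free_group k) S \<Phi>"
    and q: "q \<in> C" "q \<noteq> []" "reduced (q @ q)"
  shows "homeo_shadowing (\<Phi> q)"
  unfolding homeo_shadowing_def
proof (intro allI impI)
  fix \<epsilon> :: real assume \<epsilon>: "\<epsilon> > 0"
  let ?F = "\<Phi> q"
  define L where "L = Max (insert 0 (length ` S))"
  have L: "length s \<le> L" if "s \<in> S" for s
    unfolding L_def by (rule Max_ge) (use Sfin(1) that in simp_all)
  define B where "B = 6 * L + 4 * length q"
  define I where "I = 10 * L + 8 * length q"
  define W where "W = {w::word. set w \<subseteq> {0..<k} \<times> UNIV \<and> length w \<le> B} \<inter> C"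
  have f0: "finite ({0..<k} \<times> (UNIV::bool set))" by simp
  have finW: "finite W" unfolding W_def using finite_lists_length_le[OF f0, of B] by simp
  have ucW: "\<forall>w\<in>W. uniformly_continuous_on UNIV (\<Phi> w)" using uc_all[OF uca] by (simp add: W_def)
  have bijF: "bij ?F" using bij_Phi[OF q(1)] .
  have ucF: "uniformly_continuous_on UNIV ?F" using uc_all[OF uca q(1)] .
  have ucG: "uniformly_continuous_on UNIV (inv_into UNIV ?F)"
    using uc_all[OF uca carrier_winv[OF q(1)]] inv_Phi[OF q(1)] by simp
  obtain d where d: "d > 0" "\<And>y. pseudotrajectory (free_group k) S \<Phi> d y \<Longrightarrow>
      (\<exists>x. \<forall>g \<in> C. dist (y g) (\<Phi> g x) < \<epsilon>)"
    using sh \<epsilon> unfolding action_shadowing_def by meson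
  obtain \<eta> where \<eta>: "\<eta> > 0" "\<forall>w\<in>W. \<forall>a b. dist a b < \<eta> \<longrightarrow> dist (\<Phi> w a) (\<Phi> w b) < d"
    using uc_finite[OF finW ucW d(1)] by blast
  obtain \<delta> where \<delta>: "\<delta> > 0" "\<forall>x. (\<forall>j. dist (x (j + 1)) (?F (x j)) < \<delta> \<and> dist (x (j - 1)) (inv_into UNIV ?F (x j)) < \<delta>)
     \<longrightarrow> (\<forall>j i. \<bar>i\<bar> \<le> int I \<longrightarrow> dist (x (j + i)) (int_iter ?F i (x j)) < \<eta>)"
    using po_bound[OF bijF ucF ucG \<eta>(1), of I] by blast
  show "\<exists>d>0. \<forall>x. (\<forall>j. dist (x (j + 1)) (?F (x j)) < d \<and> dist (x (j - 1)) (inv_into UNIV ?F (x j)) < d) \<longrightarrow>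
        (\<exists>u. \<forall>j. dist (x j) (int_iter ?F j u) < \<epsilon>)"
  proof (intro exI[of _ \<delta>] conjI allI impI)
    show "\<delta> > 0" by (rule \<delta>(1))
    fix x :: "int \<Rightarrow> 'a"
    assume px: "\<forall>j. dist (x (j + 1)) (?F (x j)) < \<delta> \<and> dist (x (j - 1)) (inv_into UNIV ?F (x j)) < \<delta>"
    have po: "\<And>j i. \<bar>i\<bar> \<le> int I \<Longrightarrow> dist (x (j + i)) (int_iter ?F i (x j)) < \<eta>" using \<delta>(2) px by blast
    define y where "y g = \<Phi> (remq q g) (x (Jq q g))" for g
    have pt: "pseudotrajectory (free_group k) S \<Phi> d y"
      unfolding pseudotrajectory_def
    proof (intro ballI)
      fix s g assume s: "s \<in> S" and g: "g \<in> C"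
      have sC: "s \<in> C" using s Sfin(2) by auto
      let ?sg = "word_mult s g"
      have sgC: "?sg \<in> C" using carrier_mult[OF sC g] .
      have ident: "\<Phi> s (\<Phi> (remq q g) z) = \<Phi> (remq q ?sg) (int_iter ?F (Jq q ?sg - Jq q g) z)" for z
      proof -
        define z' where "z' = int_iter ?F (- Jq q g) z"
        have "int_iter ?F (Jq q g) z' = int_iter ?F (Jq q g + - Jq q g) z"
          unfolding z'_def using fun_cong[OF int_iter_add[OF bijF, of "Jq q g" "- Jq q g"], of z] by simp
        then have z1: "int_iter ?F (Jq q g) z' = z" by simp
        have "\<Phi> s (\<Phi> (remq q g) z) = \<Phi> s (\<Phi> g z')" using Phi_rem[OF q(1) q(2) q(3) g] z1 by simp
        also have "\<dots> = \<Phi> ?sg z'" using Phi_mult[OF sC g] by simp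
        also have "\<dots> = \<Phi> (remq q ?sg) (int_iter ?F (Jq q ?sg) z')" using Phi_rem[OF q(1) q(2) q(3) sgC] by simp
        also have "int_iter ?F (Jq q ?sg) z' = int_iter ?F (Jq q ?sg + - Jq q g) z"
          unfolding z'_def using int_iter_add[OF bijF, of "Jq q ?sg" "- Jq q g"] by simp
        finally show ?thesis by simp
      qed
      show "dist (y (s \<otimes>\<^bsub>free_group k\<^esub> g)) (\<Phi> s (y g)) < d"
      proof (cases "Jq q ?sg = Jq q g")
        case True
        then show ?thesis using ident d(1) by (simp add: y_def)
      next
        case False
        note cr = cross[OF q(2) q(3) L[OF s] False]
        let ?i = "Jq q ?sg - Jq q g"
        have rC: "remq q ?sg \<in> C" unfolding remq_def by (rule carrier_take[OF sgC])
        then have "set (remq q ?sg) \<subseteq> {0..<k} \<times> UNIV" by (auto simp: carrier_fg mem_Times_iff)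
        then have rW: "remq q ?sg \<in> W" using cr rC unfolding W_def B_def by simp
        have "\<bar>?i\<bar> \<le> int I" using cr unfolding I_def by simp
        then have "dist (x (Jq q g + ?i)) (int_iter ?F ?i (x (Jq q g))) < \<eta>" by (rule po)
        moreover have "Jq q g + ?i = Jq q ?sg" by simp
        ultimately have "dist (x (Jq q ?sg)) (int_iter ?F ?i (x (Jq q g))) < \<eta>" by metis
        then have "dist (\<Phi> (remq q ?sg) (x (Jq q ?sg))) (\<Phi> (remq q ?sg) (int_iter ?F ?i (x (Jq q g)))) < d"
          using \<eta>(2) rW by simp
        then show ?thesis using ident by (simp add: y_def)
      qed
    qed
    obtain z where z: "\<And>g. g \<in> C \<Longrightarrow> dist (y g) (\<Phi> g z) < \<epsilon>" using d(2)[OF pt] by blast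
    have "dist (x j) (int_iter ?F j z) < \<epsilon>" for j
    proof -
      have gC: "ipow q j \<in> C" by (rule ipow_carrier[OF q(1) q(2) q(3)])
      note Jj = J_ipow[OF q(1) q(2) q(3), of j]
      have "\<Phi> (ipow q j) z = int_iter ?F j z" using Phi_rem[OF q(1) q(2) q(3) gC, of z] Jj by simp
      moreover have "y (ipow q j) = x j" using Jj by (simp add: y_def)
      ultimately show ?thesis using z[OF gC] by simp
    qed
    then show "\<exists>u. \<forall>j. dist (x j) (int_iter ?F j u) < \<epsilon>" by blast
  qed
qed

end

theorem theorem4:
  fixes k :: nat and \<Phi> :: "word \<Rightarrow> 'a::metric_space \<Rightarrow> 'a" and S :: "word set"
  assumes "k \<ge> 2"
    and "is_action (free_group k) \<Phi>"
    and "unif_cont_action (free_group k) \<Phi>"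
    and "non_discrete TYPE('a)"
    and "sym_gen_set (free_group k) S"
  shows "((\<exists>g \<in> carrier (free_group k). expansive (\<Phi> g))
            \<longrightarrow> \<not> action_shadowing (free_group k) S \<Phi>)
       \<and> ((\<exists>g \<in> carrier (free_group k). g \<noteq> \<one>\<^bsub>free_group k\<^esub> \<and> \<not> homeo_shadowing (\<Phi> g))
            \<longrightarrow> \<not> action_shadowing (free_group k) S \<Phi>)"
proof -
  interpret frees k \<Phi> by unfold_locales (rule assms(2))
  have Sfin: "finite S" "S \<subseteq> carrier (free_group k)" using assms(5) by (auto simp: sym_gen_set_def)
  obtain x0 :: 'a where lp: "x0 islimpt UNIV" using assms(4) by (auto simp: non_discrete_def)
  have decomp: "\<exists>p q. g = p @ q @ winv p \<and> q \<noteq> [] \<and> reduced (q @ q) \<and> q \<in> carrier (free_group k)"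
    if gC: "g \<in> carrier (free_group k)" and gne: "g \<noteq> []" for g
  proof -
    obtain p q where pq: "g = p @ q @ winv p" "q \<noteq> []" "reduced (q @ q)"
      using cyc_decomp[of g] gC gne by (auto simp: carrier_fg)
    then have "q \<in> carrier (free_group k)" using gC carrier_app[of p "q @ winv p"] carrier_app[of q "winv p"] by auto
    then show ?thesis using pq by blast
  qed
  show ?thesis
  proof (intro conjI impI)
    assume "\<exists>g \<in> carrier (free_group k). expansive (\<Phi> g)"
    then obtain g where g: "g \<in> carrier (free_group k)" "expansive (\<Phi> g)" by blast
    show "\<not> action_shadowing (free_group k) S \<Phi>"
    proof
      assume sh: "action_shadowing (free_group k) S \<Phi>"
      show False
      proof (cases "g = []")
        case True
        obtain D where D: "D > 0" "\<And>x1 x2. (\<forall>j. dist (int_iter (\<Phi> []) j x1) (int_iter (\<Phi> []) j x2) < D) \<Longrightarrow> x1 = x2"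
          using g(2) True unfolding expansive_def by blast
        have id: "\<Phi> [] = id" by (simp add: fun_eq_iff)
        have ii: "int_iter id j = id" for j by (simp add: int_iter_def)
        obtain x' where "x' \<noteq> x0" "dist x' x0 < D" using lp D(1) unfolding islimpt_approachable by blast
        moreover have "x' = x0" by (rule D(2)) (use calculation in \<open>simp add: id ii\<close>)
        ultimately show False by simp
      next
        case False
        then obtain p q where pq: "g = p @ q @ winv p" "q \<noteq> []" "reduced (q @ q)" "q \<in> carrier (free_group k)"
          using decomp g(1) by blast
        have "expansive (\<Phi> q)" using expansive_conj[of p q] pq g assms(3) by simp
        then show False using part1_cyc[OF assms(1) lp Sfin sh pq(4) pq(2) pq(3)] by simp
      qed
    qed
  next
    assume "\<exists>g \<in> carrier (free_group k). g \<noteq> \<one>\<^bsub>free_group k\<^esub> \<and> \<not> homeo_shadowing (\<Phi> g)"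
    then obtain g where g: "g \<in> carrier (free_group k)" "g \<noteq> []" "\<not> homeo_shadowing (\<Phi> g)" by auto
    show "\<not> action_shadowing (free_group k) S \<Phi>"
    proof
      assume sh: "action_shadowing (free_group k) S \<Phi>"
      obtain p q where pq: "g = p @ q @ winv p" "q \<noteq> []" "reduced (q @ q)" "q \<in> carrier (free_group k)"
        using decomp g(1,2) by blast
      have "homeo_shadowing (\<Phi> q)" using part2_cyc[OF assms(3) Sfin sh pq(4) pq(2) pq(3)] .
      then have "homeo_shadowing (\<Phi> g)" using shadowing_conj[of p q] pq g assms(3) by simp
      then show False using g(3) by simp
    qed
  qed
qed

end
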